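(* Let $n\ge7$ and $G\cong K_3\cup K_{1,n-4}$ (a graph on $n$ vertices). Then $q(\overline{G})=2$, and $\overline G$ has a matrix realization in $S(\overline G)$ with exactly two distinct eigenvalues that has the Strong Spectral Property.
   Context: $\overline G$ denotes the complement of $G$; $K_{1,n-4}$ is a star and $\cup$ is disjoint union. For a graph $H$ on $n$ vertices, $S(H)$ is the set of real symmetric matrices $A$ with $a_{ij}\ne0$ ($i\ne j$) iff $ij\in E(H)$, diagonal unrestricted, and $q(H)$ is the minimum number of distinct eigenvalues over $S(H)$. A symmetric $A$ has the Strong Spectral Property if the only symmetric $X$ with $A\circ X=O$, $I\circ X=O$, $AX=XA$ is $X=O$ ($\circ$ the entrywise product). *)

theory Defs
  imports Complex_Main
begin

text \<open>Graphs on the vertex set {0..<n} are given by an edge predicate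
  E :: nat \<Rightarrow> nat \<Rightarrow> bool (only arguments < n matter).
  Real n x n matrices are functions nat \<Rightarrow> nat \<Rightarrow> real, only entries with
  indices < n matter.\<close>

definition mat_mult :: "nat \<Rightarrow> (nat \<Rightarrow> nat \<Rightarrow> real) \<Rightarrow> (nat \<Rightarrow> nat \<Rightarrow> real) \<Rightarrow> nat \<Rightarrow> nat \<Rightarrow> real" where
  "mat_mult n A B i j = (\<Sum>k<n. A i k * B k j)"

definition sym_mat :: "nat \<Rightarrow> (nat \<Rightarrow> nat \<Rightarrow> real) \<Rightarrow> bool" where
  "sym_mat n A \<longleftrightarrow> (\<forall>i<n. \<forall>j<n. A i j = A j i)"

definition S_graph :: "nat \<Rightarrow> (nat \<Rightarrow> nat \<Rightarrow> bool) \<Rightarrow> (nat \<Rightarrow> nat \<Rightarrow> real) set" where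
  "S_graph n H = {A. sym_mat n A \<and> (\<forall>i<n. \<forall>j<n. i \<noteq> j \<longrightarrow> (A i j \<noteq> 0 \<longleftrightarrow> H i j))}"

definition eigenvalues :: "nat \<Rightarrow> (nat \<Rightarrow> nat \<Rightarrow> real) \<Rightarrow> real set" where
  "eigenvalues n A = {mu. \<exists>v::nat \<Rightarrow> real. (\<exists>i<n. v i \<noteq> 0) \<and>
      (\<forall>i<n. (\<Sum>j<n. A i j * v j) = mu * v i)}"

definition q_graph :: "nat \<Rightarrow> (nat \<Rightarrow> nat \<Rightarrow> bool) \<Rightarrow> nat" where
  "q_graph n H = (LEAST k. \<exists>A \<in> S_graph n H. card (eigenvalues n A) = k)"

definition SSP :: "nat \<Rightarrow> (nat \<Rightarrow> nat \<Rightarrow> real) \<Rightarrow> bool" where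
  "SSP n A \<longleftrightarrow> (\<forall>X. sym_mat n X \<and> (\<forall>i<n. \<forall>j<n. A i j * X i j = 0) \<and> (\<forall>i<n. X i i = 0)
      \<and> (\<forall>i<n. \<forall>j<n. mat_mult n A X i j = mat_mult n X A i j)
      \<longrightarrow> (\<forall>i<n. \<forall>j<n. X i j = 0))"

definition complement :: "(nat \<Rightarrow> nat \<Rightarrow> bool) \<Rightarrow> nat \<Rightarrow> nat \<Rightarrow> bool" where
  "complement E i j \<longleftrightarrow> i \<noteq> j \<and> \<not> E i j"

definition K3_star :: "nat \<Rightarrow> nat \<Rightarrow> bool" where
  "K3_star i j \<longleftrightarrow> i \<noteq> j \<and> ((i < 3 \<and> j < 3) \<or> (i = 3 \<and> 4 \<le> j) \<or> (j = 3 \<and> 4 \<le> i))"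

definition graph_iso :: "nat \<Rightarrow> (nat \<Rightarrow> nat \<Rightarrow> bool) \<Rightarrow> (nat \<Rightarrow> nat \<Rightarrow> bool) \<Rightarrow> bool" where
  "graph_iso n G H \<longleftrightarrow> (\<exists>f. bij_betw f {..<n} {..<n} \<and> (\<forall>i<n. \<forall>j<n. G i j \<longleftrightarrow> H (f i) (f j)))"

end

theory Submission
  imports Defs "Jordan_Normal_Form.Schur_Decomposition"
begin

lemma cplx_eig_real:
  fixes B :: "nat \<Rightarrow> nat \<Rightarrow> real" and v :: "nat \<Rightarrow> complex"
  assumes sym: "sym_mat n B" and nz: "\<exists>i<n. v i \<noteq> 0"
    and ev: "\<forall>i<n. (\<Sum>j<n. complex_of_real (B i j) * v j) = e * v i"
  shows "Im e = 0 \<and> Re e \<in> eigenvalues n B"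
proof -
  define p where "p = Re e"
  define q where "q = Im e"
  define x where "x = (\<lambda>j. Re (v j))"
  define y where "y = (\<lambda>j. Im (v j))"
  have hx: "(\<Sum>j<n. B i j * x j) = p * x i - q * y i" if "i < n" for i
  proof -
    have "Re (\<Sum>j<n. complex_of_real (B i j) * v j) = Re (e * v i)" using ev that by simp
    then show ?thesis by (simp add: x_def y_def p_def q_def Re_sum)
  qed
  have hy: "(\<Sum>j<n. B i j * y j) = q * x i + p * y i" if "i < n" for i
  proof -
    have "Im (\<Sum>j<n. complex_of_real (B i j) * v j) = Im (e * v i)" using ev that by simp
    then show ?thesis by (simp add: x_def y_def p_def q_def Im_sum algebra_simps)
  qed
  have "(\<Sum>i<n. y i * (\<Sum>j<n. B i j * x j)) = (\<Sum>i<n. \<Sum>j<n. y i * B i j * x j)"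
    by (simp add: sum_distrib_left mult.assoc)
  also have "\<dots> = (\<Sum>j<n. \<Sum>i<n. y i * B i j * x j)" by (rule sum.swap)
  also have "\<dots> = (\<Sum>j<n. x j * (\<Sum>i<n. B j i * y i))"
    using sym unfolding sym_mat_def
    by (auto simp: sum_distrib_left mult.commute mult.left_commute intro!: sum.cong)
  finally have eq: "(\<Sum>i<n. y i * (\<Sum>j<n. B i j * x j)) = (\<Sum>j<n. x j * (\<Sum>i<n. B j i * y i))" .
  have l0: "(\<Sum>i<n. y i * (\<Sum>j<n. B i j * x j)) = (\<Sum>i<n. y i * (p * x i - q * y i))"
    by (rule sum.cong) (simp_all add: hx)
  have l: "(\<Sum>i<n. y i * (\<Sum>j<n. B i j * x j)) = p * (\<Sum>i<n. x i * y i) - q * (\<Sum>i<n. y i ^ 2)"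
    unfolding l0 by (simp add: sum_distrib_left sum_subtractf power2_eq_square algebra_simps)
  have r0: "(\<Sum>j<n. x j * (\<Sum>i<n. B j i * y i)) = (\<Sum>j<n. x j * (q * x j + p * y j))"
    by (rule sum.cong) (simp_all add: hy)
  have r: "(\<Sum>j<n. x j * (\<Sum>i<n. B j i * y i)) = q * (\<Sum>i<n. x i ^ 2) + p * (\<Sum>i<n. x i * y i)"
    unfolding r0 by (simp add: sum_distrib_left sum.distrib power2_eq_square algebra_simps)
  have qz: "q * ((\<Sum>i<n. x i ^ 2) + (\<Sum>i<n. y i ^ 2)) = 0"
    using eq l r by (simp add: algebra_simps)
  obtain i0 where i0: "i0 < n" "v i0 \<noteq> 0" using nz by blast
  have "x i0 \<noteq> 0 \<or> y i0 \<noteq> 0" using i0 by (auto simp: x_def y_def complex_eq_iff)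
  hence pos: "x i0 ^ 2 + y i0 ^ 2 > 0" by (auto simp: sum_power2_gt_zero_iff)
  have "x i0 ^ 2 + y i0 ^ 2 \<le> (\<Sum>i<n. x i ^ 2 + y i ^ 2)"
    by (rule member_le_sum[where f = "\<lambda>i. x i ^ 2 + y i ^ 2"]) (use i0 in auto)
  hence "(\<Sum>i<n. x i ^ 2) + (\<Sum>i<n. y i ^ 2) > 0" using pos by (simp add: sum.distrib)
  hence q0: "q = 0" using qz by simp
  have "p \<in> eigenvalues n B"
  proof (cases "x i0 \<noteq> 0")
    case True
    then show ?thesis unfolding eigenvalues_def using hx q0 i0 by (auto intro!: exI[of _ x])
  next
    case False
    hence "y i0 \<noteq> 0" using \<open>x i0 \<noteq> 0 \<or> y i0 \<noteq> 0\<close> by simp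
    then show ?thesis unfolding eigenvalues_def using hy q0 i0
      by (auto intro!: exI[of _ y] simp: mult.commute)
  qed
  with q0 show ?thesis by (simp add: p_def q_def)
qed

lemma pow_mat_add:
  assumes A: "(A :: 'a :: comm_ring_1 mat) \<in> carrier_mat n n"
  shows "A ^\<^sub>m (a + b) = A ^\<^sub>m a * A ^\<^sub>m b"
proof (induct b)
  case 0
  then show ?case using A by simp
next
  case (Suc b)
  have "A ^\<^sub>m (a + Suc b) = A ^\<^sub>m (a + b) * A" by simp
  also have "\<dots> = A ^\<^sub>m a * A ^\<^sub>m b * A" using Suc by simp
  also have "\<dots> = A ^\<^sub>m a * (A ^\<^sub>m b * A)"
    by (rule assoc_mult_mat[of _ n n _ n _ n]) (use A in auto)
  finally show ?case by simp
qed

lemma pow_mat_one: assumes A: "(A :: 'a :: comm_ring_1 mat) \<in> carrier_mat n n"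
  shows "A ^\<^sub>m 1 = A" using A by simp

lemma transpose_pow_sym:
  assumes A: "(A :: 'a :: comm_ring_1 mat) \<in> carrier_mat n n" and s: "transpose_mat A = A"
  shows "transpose_mat (A ^\<^sub>m k) = A ^\<^sub>m k"
proof (induct k)
  case 0
  then show ?case using A by (auto intro!: eq_matI)
next
  case (Suc k)
  have "transpose_mat (A ^\<^sub>m Suc k) = transpose_mat (A ^\<^sub>m k * A)" by simp
  also have "\<dots> = transpose_mat A * transpose_mat (A ^\<^sub>m k)"
    by (rule transpose_mult[of _ n n _ n]) (use A in auto)
  also have "\<dots> = A ^\<^sub>m 1 * A ^\<^sub>m k" using Suc s A by simp
  also have "\<dots> = A ^\<^sub>m (1 + k)" using pow_mat_add[OF A, of 1 k] by simp
  finally show ?case by simp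
qed

lemma strict_upper_pow:
  assumes T: "(T :: 'a :: comm_ring_1 mat) \<in> carrier_mat n n"
    and su: "\<And>i j. i < n \<Longrightarrow> j \<le> i \<Longrightarrow> T $$ (i,j) = 0"
  shows "i < n \<Longrightarrow> j < n \<Longrightarrow> j < i + k \<Longrightarrow> (T ^\<^sub>m k) $$ (i,j) = 0"
proof (induct k arbitrary: i j)
  case 0
  then show ?case using T by simp
next
  case (Suc k)
  have "(T ^\<^sub>m Suc k) $$ (i,j) = row (T ^\<^sub>m k) i \<bullet> col T j"
    using Suc.prems T by simp
  also have "\<dots> = (\<Sum>l\<in>{0..<n}. (T ^\<^sub>m k) $$ (i,l) * T $$ (l,j))"
    unfolding scalar_prod_def using Suc.prems T by (auto intro!: sum.cong)
  also have "\<dots> = 0"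
  proof (rule sum.neutral, rule ballI)
    fix l assume l: "l \<in> {0..<n}"
    show "(T ^\<^sub>m k) $$ (i,l) * T $$ (l,j) = 0"
    proof (cases "l < i + k")
      case True
      then show ?thesis using Suc.hyps[of i l] Suc.prems l by simp
    next
      case False
      then show ?thesis using su[of l j] Suc.prems l by simp
    qed
  qed
  finally show ?case .
qed

lemma strict_upper_nilpotent:
  assumes T: "(T :: 'a :: comm_ring_1 mat) \<in> carrier_mat n n"
    and su: "\<And>i j. i < n \<Longrightarrow> j \<le> i \<Longrightarrow> T $$ (i,j) = 0"
  shows "T ^\<^sub>m n = 0\<^sub>m n n"
  by (rule eq_matI) (use T strict_upper_pow[OF T su] in auto)

lemma sym_nilpotent_zero:
  assumes M: "(M :: real mat) \<in> carrier_mat n n" and s: "transpose_mat M = M"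
  shows "M ^\<^sub>m k = 0\<^sub>m n n \<Longrightarrow> M = 0\<^sub>m n n"
proof (induct k rule: less_induct)
  case (less k)
  show ?case
  proof (cases "k \<le> 1")
    case True
    then consider "k = 0" | "k = 1" by linarith
    then show ?thesis
    proof cases
      case 1
      then have "1\<^sub>m n = (0\<^sub>m n n :: real mat)" using less.prems M by simp
      then have "n = 0" by (metis index_one_mat(1) index_zero_mat(1) neq0_conv zero_neq_one)
      then show ?thesis using M by (auto intro!: eq_matI)
    next
      case 2
      then show ?thesis using less.prems M by simp
    qed
  next
    case False
    define j where "j = k - 1"
    have j: "j < k" "1 \<le> j" using False by (auto simp: j_def)
    define C where "C = M ^\<^sub>m j"
    have C: "C \<in> carrier_mat n n" using M by (simp add: C_def)
    have Cs: "transpose_mat C = C" unfolding C_def by (rule transpose_pow_sym[OF M s])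
    have "C * C = M ^\<^sub>m (j + j)" unfolding C_def by (rule pow_mat_add[OF M, symmetric])
    also have "j + j = k + (j - 1)" using j by (simp add: j_def)
    also have "M ^\<^sub>m (k + (j - 1)) = M ^\<^sub>m k * M ^\<^sub>m (j - 1)" by (rule pow_mat_add[OF M])
    also have "\<dots> = 0\<^sub>m n n" using less.prems M by simp
    finally have CC: "C * C = 0\<^sub>m n n" .
    have "C = 0\<^sub>m n n"
    proof (rule eq_matI)
      fix a b assume ab: "a < dim_row (0\<^sub>m n n :: real mat)" "b < dim_col (0\<^sub>m n n :: real mat)"
      hence ab: "a < n" "b < n" by auto
      have "(C * C) $$ (a,a) = (\<Sum>l\<in>{0..<n}. C $$ (a,l) * C $$ (l,a))"
        using C ab by (auto simp: scalar_prod_def intro!: sum.cong)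
      also have "\<dots> = (\<Sum>l\<in>{0..<n}. C $$ (a,l) ^ 2)"
      proof (rule sum.cong)
        fix l assume "l \<in> {0..<n}"
        hence "C $$ (l,a) = C $$ (a,l)"
          using arg_cong[OF Cs, of "\<lambda>X. X $$ (a,l)"] C ab by simp
        then show "C $$ (a,l) * C $$ (l,a) = C $$ (a,l) ^ 2" by (simp add: power2_eq_square)
      qed simp
      finally have "(\<Sum>l\<in>{0..<n}. C $$ (a,l) ^ 2) = 0" using CC ab by simp
      hence "\<forall>l\<in>{0..<n}. C $$ (a,l) ^ 2 = 0"
        by (subst (asm) sum_nonneg_eq_0_iff) auto
      then show "C $$ (a,b) = 0\<^sub>m n n $$ (a,b)" using ab by simp
    qed (use C in auto)
    then show ?thesis using less.hyps[OF j(1)] C_def by simp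
  qed
qed


lemma sym_eig_zero:
  fixes B :: "nat \<Rightarrow> nat \<Rightarrow> real"
  assumes sym: "sym_mat n B" and ev: "eigenvalues n B \<subseteq> {0}"
  shows "\<forall>i<n. \<forall>j<n. B i j = 0"
proof -
  define M where "M = (mat n n (\<lambda>(i,j). B i j) :: real mat)"
  have M: "M \<in> carrier_mat n n" by (simp add: M_def)
  define Mc where "Mc = map_mat complex_of_real M"
  have Mc: "Mc \<in> carrier_mat n n" using M by (simp add: Mc_def)
  have ceig: "e = 0" if hev: "eigenvalue Mc e" for e
  proof -
    obtain v where "eigenvector Mc v e" using hev unfolding eigenvalue_def by blast
    hence v: "v \<in> carrier_vec n" "v \<noteq> 0\<^sub>v n" "Mc *\<^sub>v v = e \<cdot>\<^sub>v v"
      unfolding eigenvector_def using Mc by auto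
    have nz: "\<exists>i<n. v $ i \<noteq> 0"
    proof (rule ccontr)
      assume "\<not> (\<exists>i<n. v $ i \<noteq> 0)"
      hence "v = 0\<^sub>v n" using v(1) by (intro eq_vecI) auto
      with v(2) show False by simp
    qed
    have eq: "\<forall>i<n. (\<Sum>j<n. complex_of_real (B i j) * v $ j) = e * v $ i"
    proof (intro allI impI)
      fix i assume i: "i < n"
      have "(Mc *\<^sub>v v) $ i = (e \<cdot>\<^sub>v v) $ i" using v(3) by simp
      moreover have "(Mc *\<^sub>v v) $ i = (\<Sum>j<n. complex_of_real (B i j) * v $ j)"
        using i v(1) Mc by (auto simp: scalar_prod_def Mc_def M_def atLeast0LessThan intro!: sum.cong)
      moreover have "(e \<cdot>\<^sub>v v) $ i = e * v $ i" using i v(1) by simp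
      ultimately show "(\<Sum>j<n. complex_of_real (B i j) * v $ j) = e * v $ i" by simp
    qed
    from cplx_eig_real[OF sym nz eq] have "Im e = 0" "Re e \<in> eigenvalues n B" by auto
    with ev show "e = 0" by (auto simp: complex_eq_iff)
  qed
  obtain as where cp: "char_poly Mc = (\<Prod>a\<leftarrow>as. [:- a, 1:])" and len: "length as = n"
    using char_poly_factorized[OF Mc] by blast
  have "\<forall>a\<in>set as. a = 0"
  proof
    fix a assume "a \<in> set as"
    hence "poly (char_poly Mc) a = 0" unfolding cp by (rule linear_poly_root)
    hence "eigenvalue Mc a" using eigenvalue_root_char_poly[OF Mc] by simp
    thus "a = 0" by (rule ceig)
  qed
  hence as: "as = replicate n 0" using len by (metis replicate_length_same)
  have cpc: "char_poly Mc = monom 1 n"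
    unfolding cp as by (simp add: monom_altdef prod_list_replicate)
  have "char_poly Mc = map_poly of_real (char_poly M)"
    unfolding Mc_def by (rule of_real_hom.char_poly_hom[OF M])
  hence "map_poly Re (char_poly Mc) = map_poly Re (map_poly of_real (char_poly M))" by simp
  also have "\<dots> = char_poly M" by (simp add: map_poly_map_poly o_def)
  finally have "char_poly M = monom 1 n" using cpc by (simp add: map_poly_monom)
  hence cpM: "char_poly M = (\<Prod>e\<leftarrow>replicate n (0::real). [:- e, 1:])"
    by (simp add: monom_altdef prod_list_replicate)
  obtain T P Q where sd: "schur_decomposition M (replicate n 0) = (T,P,Q)" by (metis prod_cases3)
  from schur_decomposition[OF M cpM sd]
  have sim: "similar_mat_wit M T P Q" and ut: "upper_triangular T"
    and dg: "diag_mat T = replicate n 0" by auto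
  from similar_mat_witD2[OF M sim]
  have T: "T \<in> carrier_mat n n" and P: "P \<in> carrier_mat n n" and Q: "Q \<in> carrier_mat n n" by auto
  have su: "T $$ (i,j) = 0" if "i < n" "j \<le> i" for i j
  proof (cases "j < i")
    case True
    then show ?thesis using ut that T unfolding upper_triangular_def by auto
  next
    case False
    hence "j = i" using that by simp
    have "diag_mat T ! i = T $$ (i,i)" using T that unfolding diag_mat_def by simp
    then show ?thesis using dg that \<open>j = i\<close> by simp
  qed
  have Tn: "T ^\<^sub>m n = 0\<^sub>m n n" by (rule strict_upper_nilpotent[OF T su])
  have "M ^\<^sub>m n = P * T ^\<^sub>m n * Q" by (rule similar_mat_wit_pow_id[OF sim])
  also have "\<dots> = 0\<^sub>m n n" unfolding Tn using P Q by simp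
  finally have Mn: "M ^\<^sub>m n = 0\<^sub>m n n" .
  have Ms: "transpose_mat M = M"
    using sym unfolding sym_mat_def M_def by (auto intro!: eq_matI)
  have M0: "M = 0\<^sub>m n n" by (rule sym_nilpotent_zero[OF M Ms Mn])
  show ?thesis
  proof (intro allI impI)
    fix i j assume "i < n" "j < n"
    then show "B i j = 0" using arg_cong[OF M0, of "\<lambda>X. X $$ (i,j)"] by (simp add: M_def)
  qed
qed


definition Rw :: "nat \<Rightarrow> nat \<Rightarrow> nat \<Rightarrow> real" where
"Rw n i a = (let p = real n - 6 in
  if 6 \<le> i then (if a = 0 then 40 else if a = 1 then 20 else -40)
  else if i = 0 then (if a = 0 then 3 else 0)
  else if i = 1 then (if a = 1 then 3 else 0)
  else if i = 2 then (if a = 2 then 3 else 0)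
  else if i = 3 then (if a = 0 then 5 * (4*p+1) else 10 * (4*p+1))
  else if i = 4 then (if a = 0 then 8*p+14 else if a = 1 then -44*p-5 else 40*p-2)
  else (if a = 0 then 56*p-2 else if a = 1 then -8*p-10 else -20*p+11))"

definition A0 :: "nat \<Rightarrow> nat \<Rightarrow> nat \<Rightarrow> real" where
  "A0 n i j = (\<Sum>a<3. Rw n i a * Rw n j a)"

definition SS :: "nat \<Rightarrow> real" where
  "SS n = 9 + 225 * (4 * (real n - 6) + 1)^2"

lemma A0_expand: "A0 n i j = Rw n i 0 * Rw n j 0 + Rw n i 1 * Rw n j 1 + Rw n i 2 * Rw n j 2"
  by (simp add: A0_def eval_nat_numeral)

lemma sum_split6:
  fixes f :: "nat \<Rightarrow> real"
  assumes "6 \<le> n" and "\<And>k. 6 \<le> k \<Longrightarrow> f k = C"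
  shows "(\<Sum>k<n. f k) = f 0 + f 1 + f 2 + f 3 + f 4 + f 5 + (real n - 6) * C"
proof -
  have u: "{..<n} = {..<6} \<union> {6..<n}" using assms(1) by auto
  have "(\<Sum>k<n. f k) = (\<Sum>k<6. f k) + (\<Sum>k\<in>{6..<n}. f k)"
    unfolding u by (rule sum.union_disjoint) auto
  also have "(\<Sum>k\<in>{6..<n}. f k) = (\<Sum>k\<in>{6..<n}. C)" using assms(2) by simp
  also have "\<dots> = (real n - 6) * C" using assms(1) by (simp add: of_nat_diff)
  also have "(\<Sum>k<6. f k) = f 0 + f 1 + f 2 + f 3 + f 4 + f 5" by (simp add: eval_nat_numeral)
  finally show ?thesis .
qed

lemma frame:
  assumes n: "6 \<le> n" and a: "a < 3" and b: "b < 3"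
  shows "(\<Sum>k<n. Rw n k a * Rw n k b) = (if a = b then SS n else 0)"
proof -
  have "(\<Sum>k<n. Rw n k a * Rw n k b) = Rw n 0 a * Rw n 0 b + Rw n 1 a * Rw n 1 b + Rw n 2 a * Rw n 2 b
     + Rw n 3 a * Rw n 3 b + Rw n 4 a * Rw n 4 b + Rw n 5 a * Rw n 5 b + (real n - 6) * (Rw n 6 a * Rw n 6 b)"
    by (rule sum_split6[OF n]) (simp add: Rw_def)
  also have "\<dots> = (if a = b then SS n else 0)"
  proof -
    have "a = 0 \<or> a = 1 \<or> a = 2" "b = 0 \<or> b = 1 \<or> b = 2" using a b by auto
    then show ?thesis
      by (auto simp: Rw_def SS_def Let_def power2_eq_square algebra_simps)
  qed
  finally show ?thesis .
qed

lemma gram_sq: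
  fixes R :: "nat \<Rightarrow> nat \<Rightarrow> real"
  assumes F: "\<And>a b. a < d \<Longrightarrow> b < d \<Longrightarrow> (\<Sum>k<n. R k a * R k b) = (if a = b then S else 0)"
  shows "(\<Sum>k<n. (\<Sum>a<d. R i a * R k a) * (\<Sum>b<d. R k b * R j b)) = S * (\<Sum>a<d. R i a * R j a)"
proof -
  have "(\<Sum>k<n. (\<Sum>a<d. R i a * R k a) * (\<Sum>b<d. R k b * R j b))
      = (\<Sum>k<n. \<Sum>a<d. \<Sum>b<d. R i a * R j b * (R k a * R k b))"
    by (simp add: sum_product mult_ac)
  also have "\<dots> = (\<Sum>a<d. \<Sum>k<n. \<Sum>b<d. R i a * R j b * (R k a * R k b))"
    by (rule sum.swap)
  also have "\<dots> = (\<Sum>a<d. \<Sum>b<d. \<Sum>k<n. R i a * R j b * (R k a * R k b))"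
    by (rule sum.cong[OF refl], rule sum.swap)
  also have "\<dots> = (\<Sum>a<d. \<Sum>b<d. R i a * R j b * (\<Sum>k<n. R k a * R k b))"
    by (simp add: sum_distrib_left)
  also have "\<dots> = (\<Sum>a<d. \<Sum>b<d. R i a * R j b * (if a = b then S else 0))"
    using F by (intro sum.cong refl) auto
  also have "\<dots> = (\<Sum>a<d. R i a * R j a * S)"
    by (rule sum.cong[OF refl]) (simp add: if_distrib cong: if_cong)
  finally show ?thesis by (simp add: sum_distrib_left mult_ac)
qed

lemma A0_sq:
  assumes "6 \<le> n"
  shows "mat_mult n (A0 n) (A0 n) i j = SS n * A0 n i j"
proof -
  have "mat_mult n (A0 n) (A0 n) i j = (\<Sum>k<n. (\<Sum>a<3. Rw n i a * Rw n k a) * (\<Sum>b<3. Rw n k b * Rw n j b))"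
    by (simp add: mat_mult_def A0_def mult.commute)
  also have "\<dots> = SS n * A0 n i j" unfolding A0_def
    by (rule gram_sq) (rule frame[OF assms])
  finally show ?thesis .
qed


lemma A0_pattern:
  assumes n: "7 \<le> n" and ij: "i \<noteq> j"
  shows "A0 n i j \<noteq> 0 \<longleftrightarrow> \<not> K3_star i j"
proof -
  have rn: "real n \<ge> 7" using n by simp
  have ci: "i = 0 \<or> i = 1 \<or> i = 2 \<or> i = 3 \<or> i = 4 \<or> i = 5 \<or> 6 \<le> i" by arith
  have cj: "j = 0 \<or> j = 1 \<or> j = 2 \<or> j = 3 \<or> j = 4 \<or> j = 5 \<or> 6 \<le> j" by arith
  from ci cj ij rn show ?thesis
    by (elim disjE) (auto simp: A0_expand Rw_def Let_def K3_star_def algebra_simps)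
qed


lemma sum_only:
  fixes f :: "nat \<Rightarrow> real"
  assumes "S \<subseteq> {..<n}" and "\<And>k. k < n \<Longrightarrow> k \<notin> S \<Longrightarrow> f k = 0"
  shows "(\<Sum>k<n. f k) = sum f S"
  by (rule sum.mono_neutral_right) (use assms in auto)

lemma A0_SSP:
  assumes n: "7 \<le> n"
  shows "SSP n (A0 n)"
  unfolding SSP_def
proof (rule allI, rule impI)
  fix X :: "nat \<Rightarrow> nat \<Rightarrow> real"
  assume H: "sym_mat n X \<and> (\<forall>i<n. \<forall>j<n. A0 n i j * X i j = 0) \<and> (\<forall>i<n. X i i = 0) \<and>
      (\<forall>i<n. \<forall>j<n. mat_mult n (A0 n) X i j = mat_mult n X (A0 n) i j)"
  hence sX: "\<And>i j. i < n \<Longrightarrow> j < n \<Longrightarrow> X i j = X j i"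
    and zX: "\<And>i j. i < n \<Longrightarrow> j < n \<Longrightarrow> A0 n i j * X i j = 0"
    and dX: "\<And>i. i < n \<Longrightarrow> X i i = 0"
    and cX: "\<And>i j. i < n \<Longrightarrow> j < n \<Longrightarrow> mat_mult n (A0 n) X i j = mat_mult n X (A0 n) i j"
    unfolding sym_mat_def by auto
  have Xz: "X i j = 0" if "i < n" "j < n" "\<not> K3_star i j" for i j
  proof (cases "i = j")
    case True then show ?thesis using dX that by simp
  next
    case False
    hence "A0 n i j \<noteq> 0" using A0_pattern[OF n False] that by simp
    then show ?thesis using zX[OF that(1,2)] by simp
  qed
  have eqL: "A0 n t 3 * X 3 l = X t 0 * A0 n 0 l + X t 1 * A0 n 1 l + X t 2 * A0 n 2 l"
    if t: "t < 3" and l: "4 \<le> l" "l < n" for t l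
  proof -
    have "mat_mult n (A0 n) X t l = (\<Sum>k<n. A0 n t k * X k l)" by (simp add: mat_mult_def)
    also have "\<dots> = sum (\<lambda>k. A0 n t k * X k l) {3}"
    proof (rule sum_only)
      show "{3} \<subseteq> {..<n}" using n by auto
      fix k assume "k < n" "k \<notin> {3}"
      then have "\<not> K3_star k l" using l by (auto simp: K3_star_def)
      then show "A0 n t k * X k l = 0" using Xz[of k l] \<open>k < n\<close> l by simp
    qed
    also have "\<dots> = A0 n t 3 * X 3 l" by simp
    finally have L: "mat_mult n (A0 n) X t l = A0 n t 3 * X 3 l" .
    have "mat_mult n X (A0 n) t l = (\<Sum>k<n. X t k * A0 n k l)" by (simp add: mat_mult_def)
    also have "\<dots> = sum (\<lambda>k. X t k * A0 n k l) {0,1,2}"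
    proof (rule sum_only)
      show "{0,1,2} \<subseteq> {..<n}" using n by auto
      fix k assume "k < n" "k \<notin> {0,1,2}"
      then have "\<not> K3_star t k" using t by (auto simp: K3_star_def)
      then show "X t k * A0 n k l = 0" using Xz[of t k] \<open>k < n\<close> t n by simp
    qed
    also have "\<dots> = X t 0 * A0 n 0 l + X t 1 * A0 n 1 l + X t 2 * A0 n 2 l" by simp
    finally have R: "mat_mult n X (A0 n) t l = X t 0 * A0 n 0 l + X t 1 * A0 n 1 l + X t 2 * A0 n 2 l" .
    show ?thesis using cX[of t l] L R t l by simp
  qed
  define p where "p = real n - 6"
  have p1: "p \<ge> 1" using n by (simp add: p_def)
  define al where "al = X 0 1"
  define be where "be = X 0 2"
  define ga where "ga = X 1 2"
  have x00: "X 0 0 = 0" "X 1 1 = 0" "X 2 2 = 0" using dX n by auto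
  have x10: "X 1 0 = al" "X 2 0 = be" "X 2 1 = ga" using sX n by (auto simp: al_def be_def ga_def)
  define w6 where "w6 = (4 * p + 1) * X 3 6"
  define w4 where "w4 = (4 * p + 1) * X 3 4"
  have e1: "15 * w6 = 60 * al - 120 * be"
    using eqL[of 0 6] n x00 unfolding w6_def al_def be_def
    by (simp add: A0_expand Rw_def Let_def p_def algebra_simps)
  have e2: "30 * w6 = 120 * al - 120 * ga"
    using eqL[of 1 6] n x00 x10 unfolding w6_def al_def be_def ga_def
    by (simp add: A0_expand Rw_def Let_def p_def algebra_simps)
  have e3: "30 * w6 = 120 * be + 60 * ga"
    using eqL[of 2 6] n x00 x10 unfolding w6_def al_def be_def ga_def
    by (simp add: A0_expand Rw_def Let_def p_def algebra_simps)
  have e4: "30 * w4 = al * (42 + 24 * p) + ga * (-6 + 120 * p)"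
    using eqL[of 1 4] n x00 x10 unfolding w4_def al_def be_def ga_def
    by (simp add: A0_expand Rw_def Let_def p_def algebra_simps)
  have e5: "30 * w4 = be * (42 + 24 * p) + ga * (-15 - 132 * p)"
    using eqL[of 2 4] n x00 x10 unfolding w4_def al_def be_def ga_def
    by (simp add: A0_expand Rw_def Let_def p_def algebra_simps)
  have hga: "ga = 2 * be" using e1 e2 by linarith
  have hal: "al = 4 * be" using e1 e2 e3 by linarith
  have "be * (144 + 576 * p) = 0"
  proof -
    have "al * (42 + 24 * p) + ga * (-6 + 120 * p) = be * (42 + 24 * p) + ga * (-15 - 132 * p)"
      using e4 e5 by simp
    then show ?thesis unfolding hal hga by (simp add: algebra_simps)
  qed
  moreover have "144 + 576 * p \<noteq> 0" using p1 by simp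
  ultimately have be0: "be = 0" by simp
  have al0: "al = 0" and ga0: "ga = 0" using hal hga be0 by auto
  have y0: "X 3 l = 0" if l: "4 \<le> l" "l < n" for l
  proof -
    have "A0 n 1 3 * X 3 l = 0"
      using eqL[of 1 l] l x00 x10 al0 ga0 unfolding al_def ga_def by simp
    moreover have "A0 n 1 3 \<noteq> 0" using p1 by (simp add: A0_expand Rw_def Let_def p_def)
    ultimately show ?thesis by simp
  qed
  show "\<forall>i<n. \<forall>j<n. X i j = 0"
  proof (intro allI impI)
    fix i j assume ij: "i < n" "j < n"
    show "X i j = 0"
    proof (cases "K3_star i j")
      case False then show ?thesis using Xz ij by simp
    next
      case True
      then consider "i \<noteq> j" "i < 3" "j < 3" | "i = 3" "4 \<le> j" | "j = 3" "4 \<le> i"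
        unfolding K3_star_def by auto
      then show ?thesis
      proof cases
        case 1
        then have "(i = 0 \<or> i = 1 \<or> i = 2) \<and> (j = 0 \<or> j = 1 \<or> j = 2)" by auto
        then show ?thesis using 1 x00 x10 al0 be0 ga0 unfolding al_def be_def ga_def by auto
      next
        case 2 then show ?thesis using y0 ij by simp
      next
        case 3 then show ?thesis using y0[of i] sX[of i j] ij by simp
      qed
    qed
  qed
qed


lemma two_eig:
  assumes sq: "\<And>i j. i < n \<Longrightarrow> j < n \<Longrightarrow> mat_mult n B B i j = S * B i j"
    and S: "S \<noteq> 0" and j0: "j0 < n" "B j0 j0 \<noteq> 0" "B j0 j0 \<noteq> S"
  shows "eigenvalues n B = {0, S}"
proof (intro equalityI subsetI)
  fix r assume "r \<in> eigenvalues n B"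
  then obtain v i0 where v: "i0 < n" "v i0 \<noteq> 0" and ev: "\<And>i. i < n \<Longrightarrow> (\<Sum>j<n. B i j * v j) = r * v i"
    unfolding eigenvalues_def by blast
  have "(\<Sum>j<n. mat_mult n B B i0 j * v j) = (\<Sum>j<n. \<Sum>k<n. B i0 k * B k j * v j)"
    by (simp add: mat_mult_def sum_distrib_right)
  also have "\<dots> = (\<Sum>k<n. \<Sum>j<n. B i0 k * B k j * v j)" by (rule sum.swap)
  also have "\<dots> = (\<Sum>k<n. B i0 k * (\<Sum>j<n. B k j * v j))"
    by (simp add: sum_distrib_left mult.assoc)
  also have "\<dots> = (\<Sum>k<n. B i0 k * (r * v k))" by (rule sum.cong) (simp_all add: ev)
  also have "\<dots> = r * (\<Sum>k<n. B i0 k * v k)" by (simp add: sum_distrib_left mult_ac)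
  also have "\<dots> = r * (r * v i0)" using ev v by simp
  finally have a: "(\<Sum>j<n. mat_mult n B B i0 j * v j) = r * (r * v i0)" .
  have "(\<Sum>j<n. mat_mult n B B i0 j * v j) = (\<Sum>j<n. S * (B i0 j * v j))"
    by (rule sum.cong) (simp_all add: sq v)
  also have "\<dots> = S * (r * v i0)" using ev v by (simp add: sum_distrib_left[symmetric])
  finally have "r * (r * v i0) = S * (r * v i0)" using a by simp
  hence "(r * (r - S)) * v i0 = 0" by (simp add: algebra_simps)
  with v have "r * (r - S) = 0" by simp
  then show "r \<in> {0, S}" by auto
next
  fix r assume "r \<in> {0, S}"
  then consider "r = 0" | "r = S" by auto
  then show "r \<in> eigenvalues n B"
  proof cases
    case 1
    define v where "v = (\<lambda>j. (if j = j0 then S else 0) - B j j0)"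
    have "(\<Sum>j<n. B i j * v j) = r * v i" if "i < n" for i
    proof -
      have "(\<Sum>j<n. B i j * v j) = (\<Sum>j<n. B i j * (if j = j0 then S else 0)) - mat_mult n B B i j0"
        by (simp add: v_def mat_mult_def right_diff_distrib sum_subtractf)
      also have "(\<Sum>j<n. B i j * (if j = j0 then S else 0)) = B i j0 * S"
        using j0 by (simp add: if_distrib cong: if_cong)
      finally show ?thesis using sq[OF that j0(1)] 1 by simp
    qed
    moreover have "v j0 \<noteq> 0" using j0 by (simp add: v_def)
    ultimately show ?thesis unfolding eigenvalues_def using j0 by blast
  next
    case 2
    define v where "v = (\<lambda>j. B j j0)"
    have "(\<Sum>j<n. B i j * v j) = r * v i" if "i < n" for i
      using sq[OF that j0(1)] 2 by (simp add: v_def mat_mult_def)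
    moreover have "v j0 \<noteq> 0" using j0 by (simp add: v_def)
    ultimately show ?thesis unfolding eigenvalues_def using j0 by blast
  qed
qed

lemma eig_finite: "finite (eigenvalues n B)"
proof -
  define M where "M = (mat n n (\<lambda>(i,j). B i j) :: real mat)"
  have M: "M \<in> carrier_mat n n" by (simp add: M_def)
  have "eigenvalues n B \<subseteq> {r. poly (char_poly M) r = 0}"
  proof
    fix r assume "r \<in> eigenvalues n B"
    then obtain v i0 where v: "i0 < n" "v i0 \<noteq> 0" and ev: "\<And>i. i < n \<Longrightarrow> (\<Sum>j<n. B i j * v j) = r * v i"
      unfolding eigenvalues_def by blast
    define w where "w = vec n v"
    have w: "w \<in> carrier_vec n" by (simp add: w_def)
    have w0: "w \<noteq> 0\<^sub>v n"
    proof
      assume "w = 0\<^sub>v n"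
      hence "w $ i0 = 0" using v by simp
      with v show False by (simp add: w_def)
    qed
    have "M *\<^sub>v w = r \<cdot>\<^sub>v w"
    proof (rule eq_vecI)
      fix i assume "i < dim_vec (r \<cdot>\<^sub>v w)"
      hence i: "i < n" using w by simp
      have "(M *\<^sub>v w) $ i = (\<Sum>j<n. B i j * v j)"
        using i by (auto simp: M_def w_def scalar_prod_def atLeast0LessThan intro!: sum.cong)
      also have "\<dots> = (r \<cdot>\<^sub>v w) $ i" using ev[OF i] i by (simp add: w_def)
      finally show "(M *\<^sub>v w) $ i = (r \<cdot>\<^sub>v w) $ i" .
    qed (use M w in simp)
    hence "eigenvector M w r" unfolding eigenvector_def using w w0 M by simp
    hence "eigenvalue M r" unfolding eigenvalue_def by blast
    thus "r \<in> {r. poly (char_poly M) r = 0}" using eigenvalue_root_char_poly[OF M] by simp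
  qed
  moreover have "char_poly M \<noteq> 0"
    using degree_monic_char_poly[OF M] by auto
  ultimately show ?thesis using poly_roots_finite finite_subset by blast
qed

lemma card_ge2:
  assumes sym: "sym_mat n A" and ij: "i0 < n" "j0 < n" "i0 \<noteq> j0" "A i0 j0 \<noteq> 0"
  shows "2 \<le> card (eigenvalues n A)"
proof (rule ccontr)
  assume "\<not> 2 \<le> card (eigenvalues n A)"
  hence c: "card (eigenvalues n A) \<le> 1" by simp
  obtain mu where mu: "eigenvalues n A \<subseteq> {mu}"
  proof (cases "card (eigenvalues n A) = 0")
    case True
    hence "eigenvalues n A = {}" using eig_finite by simp
    then show ?thesis using that by blast
  next
    case False
    hence "card (eigenvalues n A) = 1" using c by simp
    then obtain x where "eigenvalues n A = {x}" by (rule card_1_singletonE)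
    then show ?thesis using that by blast
  qed
  define B where "B = (\<lambda>i j. A i j - (if i = j then mu else 0))"
  have symB: "sym_mat n B" using sym unfolding sym_mat_def B_def by auto
  have "eigenvalues n B \<subseteq> {0}"
  proof
    fix r assume "r \<in> eigenvalues n B"
    then obtain v k where v: "k < n" "v k \<noteq> 0" and ev: "\<And>i. i < n \<Longrightarrow> (\<Sum>j<n. B i j * v j) = r * v i"
      unfolding eigenvalues_def by blast
    have "(\<Sum>j<n. A i j * v j) = (r + mu) * v i" if i: "i < n" for i
    proof -
      have "(\<Sum>j<n. B i j * v j) = (\<Sum>j<n. A i j * v j) - (\<Sum>j<n. (if i = j then mu else 0) * v j)"
        by (simp add: B_def left_diff_distrib sum_subtractf)
      also have "(\<Sum>j<n. (if i = j then mu else 0) * v j) = (\<Sum>j<n. if i = j then mu * v j else 0)"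
        by (rule sum.cong) auto
      also have "\<dots> = mu * v i" using i by simp
      finally show ?thesis using ev[OF i] by (simp add: algebra_simps)
    qed
    hence "r + mu \<in> eigenvalues n A" unfolding eigenvalues_def using v by blast
    with mu show "r \<in> {0}" by auto
  qed
  from sym_eig_zero[OF symB this] ij have "B i0 j0 = 0" by blast
  with ij show False by (simp add: B_def)
qed


theorem mainTheorem17:
  fixes n :: nat and G :: "nat \<Rightarrow> nat \<Rightarrow> bool"
  assumes "n \<ge> 7"
    and "graph_iso n G K3_star"
  shows "q_graph n (complement G) = 2 \<and>
    (\<exists>A \<in> S_graph n (complement G). card (eigenvalues n A) = 2 \<and> SSP n A)"
proof -
  have n: "7 \<le> n" using assms(1) .
  obtain f where f: "bij_betw f {..<n} {..<n}" and iso: "\<And>i j. i < n \<Longrightarrow> j < n \<Longrightarrow> G i j \<longleftrightarrow> K3_star (f i) (f j)"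
    using assms(2) unfolding graph_iso_def by blast
  define g where "g = inv_into {..<n} f"
  have fl: "\<And>i. i < n \<Longrightarrow> f i < n" using f by (auto dest: bij_betwE)
  have gl: "\<And>k. k < n \<Longrightarrow> g k < n" unfolding g_def using f
    by (metis bij_betw_def inv_into_into lessThan_iff)
  have fg: "\<And>k. k < n \<Longrightarrow> f (g k) = k" unfolding g_def using f
    by (metis bij_betw_def f_inv_into_f lessThan_iff)
  have gf: "\<And>i. i < n \<Longrightarrow> g (f i) = i" unfolding g_def using f
    by (metis bij_betw_def inv_into_f_f lessThan_iff)
  have finj: "\<And>i j. i < n \<Longrightarrow> j < n \<Longrightarrow> f i = f j \<Longrightarrow> i = j" using gf by metis
  have reidx: "\<And>h :: nat \<Rightarrow> real. (\<Sum>k<n. h (f k)) = (\<Sum>k<n. h k)"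
    using sum.reindex_bij_betw[OF f] by blast
  define A where "A = (\<lambda>i j. A0 n (f i) (f j))"
  have A0sym: "\<And>i j. A0 n i j = A0 n j i" by (simp add: A0_def mult.commute)
  have AS: "A \<in> S_graph n (complement G)"
    unfolding S_graph_def sym_mat_def
  proof (intro CollectI conjI allI impI)
    fix i j assume "i < n" "j < n"
    then show "A i j = A j i" by (simp add: A_def A0sym)
  next
    fix i j assume ij: "i < n" "j < n" "i \<noteq> j"
    hence fij: "f i \<noteq> f j" using finj by blast
    show "A i j \<noteq> 0 \<longleftrightarrow> complement G i j"
      using A0_pattern[OF n fij] iso[OF ij(1,2)] ij by (simp add: A_def complement_def)
  qed
  have SSpos: "SS n > 9" using n by (simp add: SS_def)
  have Asq: "mat_mult n A A i j = SS n * A i j" if "i < n" "j < n" for i j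
  proof -
    have "mat_mult n A A i j = (\<Sum>k<n. (\<lambda>k. A0 n (f i) k * A0 n k (f j)) (f k))"
      by (simp add: mat_mult_def A_def)
    also have "\<dots> = mat_mult n (A0 n) (A0 n) (f i) (f j)"
      using reidx[of "\<lambda>k. A0 n (f i) k * A0 n k (f j)"] by (simp add: mat_mult_def)
    also have "\<dots> = SS n * A i j" using A0_sq n by (simp add: A_def)
    finally show ?thesis .
  qed
  have g0: "g 0 < n" using gl n by simp
  have Ag0: "A (g 0) (g 0) = 9" using fg[of 0] n by (simp add: A_def A0_expand Rw_def)
  have eigA: "eigenvalues n A = {0, SS n}"
    by (rule two_eig[OF Asq _ g0]) (use SSpos Ag0 in auto)
  have cardA: "card (eigenvalues n A) = 2" unfolding eigA using SSpos by simp
  have sspA: "SSP n A"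
    unfolding SSP_def
  proof (rule allI, rule impI)
    fix X :: "nat \<Rightarrow> nat \<Rightarrow> real"
    assume H: "sym_mat n X \<and> (\<forall>i<n. \<forall>j<n. A i j * X i j = 0) \<and> (\<forall>i<n. X i i = 0) \<and>
      (\<forall>i<n. \<forall>j<n. mat_mult n A X i j = mat_mult n X A i j)"
    define Y where "Y = (\<lambda>k l. X (g k) (g l))"
    have AA0: "\<And>k l. k < n \<Longrightarrow> l < n \<Longrightarrow> A (g k) (g l) = A0 n k l" by (simp add: A_def fg)
    have "sym_mat n Y \<and> (\<forall>i<n. \<forall>j<n. A0 n i j * Y i j = 0) \<and> (\<forall>i<n. Y i i = 0) \<and>
      (\<forall>i<n. \<forall>j<n. mat_mult n (A0 n) Y i j = mat_mult n Y (A0 n) i j)"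
    proof (intro conjI allI impI)
      show "sym_mat n Y" using H gl unfolding sym_mat_def Y_def by auto
    next
      fix i j assume ij: "i < n" "j < n"
      show "A0 n i j * Y i j = 0" using H gl[OF ij(1)] gl[OF ij(2)] AA0[OF ij] unfolding Y_def by metis
    next
      fix i assume "i < n" then show "Y i i = 0" using H gl unfolding Y_def by auto
    next
      fix i j assume ij: "i < n" "j < n"
      have L: "mat_mult n (A0 n) Y i j = mat_mult n A X (g i) (g j)"
      proof -
        have "mat_mult n (A0 n) Y i j = (\<Sum>k<n. (\<lambda>k. A0 n i k * X (g k) (g j)) (f k))"
          using reidx[of "\<lambda>k. A0 n i k * X (g k) (g j)"] by (simp add: mat_mult_def Y_def)
        also have "\<dots> = (\<Sum>k<n. A (g i) k * X k (g j))"
          by (rule sum.cong) (simp_all add: gf A_def fg ij)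
        finally show ?thesis by (simp add: mat_mult_def)
      qed
      have R: "mat_mult n Y (A0 n) i j = mat_mult n X A (g i) (g j)"
      proof -
        have "mat_mult n Y (A0 n) i j = (\<Sum>k<n. (\<lambda>k. X (g i) (g k) * A0 n k j) (f k))"
          using reidx[of "\<lambda>k. X (g i) (g k) * A0 n k j"] by (simp add: mat_mult_def Y_def)
        also have "\<dots> = (\<Sum>k<n. X (g i) k * A k (g j))"
          by (rule sum.cong) (simp_all add: gf A_def fg ij)
        finally show ?thesis by (simp add: mat_mult_def)
      qed
      show "mat_mult n (A0 n) Y i j = mat_mult n Y (A0 n) i j"
        unfolding L R using H gl ij by auto
    qed
    hence Y0: "\<forall>i<n. \<forall>j<n. Y i j = 0" using A0_SSP[OF n] unfolding SSP_def by blast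
    show "\<forall>i<n. \<forall>j<n. X i j = 0"
    proof (intro allI impI)
      fix i j assume "i < n" "j < n"
      then show "X i j = 0" using Y0 fl gf unfolding Y_def by metis
    qed
  qed
  have low: "2 \<le> k" if hk: "\<exists>B\<in>S_graph n (complement G). card (eigenvalues n B) = k" for k
  proof -
    obtain B where B: "B \<in> S_graph n (complement G)" and k: "card (eigenvalues n B) = k" using hk by blast
    have g3: "g 3 < n" using gl n by simp
    have "g 0 \<noteq> g 3" using fg[of 0] fg[of 3] n by force
    moreover have "\<not> G (g 0) (g 3)" using iso[OF g0 g3] fg[of 0] fg[of 3] n by (simp add: K3_star_def)
    ultimately have "complement G (g 0) (g 3)" by (simp add: complement_def)
    hence "B (g 0) (g 3) \<noteq> 0" using B g0 g3 \<open>g 0 \<noteq> g 3\<close> unfolding S_graph_def by blast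
    moreover have "sym_mat n B" using B unfolding S_graph_def by blast
    ultimately show ?thesis using card_ge2[OF _ g0 g3 \<open>g 0 \<noteq> g 3\<close>] k by blast
  qed
  have "q_graph n (complement G) = 2"
    unfolding q_graph_def
  proof (rule Least_equality)
    show "\<exists>B\<in>S_graph n (complement G). card (eigenvalues n B) = 2" using AS cardA by blast
  next
    fix k assume "\<exists>B\<in>S_graph n (complement G). card (eigenvalues n B) = k"
    then show "2 \<le> k" by (rule low)
  qed
  then show ?thesis using AS cardA sspA by blast
qed

end
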